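(* Let $\mathbb{F}$ be any field and let $\Phi: M_n(\mathbb{F}) \to M_r(\mathbb{F})$ be a linear map preserving zero products. If $\Phi(I_n)$ is an idempotent, then there exist a nonnegative integer $k$ with $kn\le r$ and a nonsingular $S \in M_r(\mathbb{F})$ such that $$\Phi(I_n)\Phi(A) = \Phi(A)\Phi(I_n) = S\begin{pmatrix} I_k\otimes A & 0\\ 0 & 0_{r-kn}\end{pmatrix}S^{-1}\quad\text{for all } A\in M_n(\mathbb{F});$$ in particular $\Psi_1 := \Phi(I_n)\Phi(\cdot)$ is an algebra homomorphism. Moreover $\Psi_0 := (I_r - \Phi(I_n))\Phi(\cdot)$ is a linear map satisfying $\Psi_0(X)\Psi_0(Y) = 0$ for all $X,Y \in M_n(\mathbb{F})$, and $\Phi = \Psi_1 + \Psi_0$. If $\Phi(I_n) = I_r$, then $\Phi$ is a unital algebra homomorphism of the form $A \mapsto S(I_k\otimes A)S^{-1}$ (with $r = nk$).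
   Context: A map $\Phi$ preserves zero products if $\Phi(A)\Phi(B)=0$ whenever $AB=0$. An algebra homomorphism is a linear multiplicative map. $I_k\otimes A$ denotes the block diagonal matrix $A\oplus\cdots\oplus A$ with $k$ copies of $A$. *)

theory Defs
  imports "Jordan_Normal_Form.Matrix"
begin

text \<open>Block diagonal matrix I_k (x) A = A (+) ... (+) A (k copies), for a square matrix A.\<close>
definition kron_id :: "nat \<Rightarrow> 'a::zero mat \<Rightarrow> 'a mat" where
  "kron_id k A = (let n = dim_row A in
     mat (k * n) (k * n) (\<lambda>(i, j). if i div n = j div n then A $$ (i mod n, j mod n) else 0))"

definition padded_kron_id :: "nat \<Rightarrow> nat \<Rightarrow> 'a::zero mat \<Rightarrow> 'a mat" where
  "padded_kron_id r k A = (let m = k * dim_row A in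
     four_block_mat (kron_id k A) (0\<^sub>m m (r - m)) (0\<^sub>m (r - m) m) (0\<^sub>m (r - m) (r - m)))"

definition linear_mat_map :: "nat \<Rightarrow> nat \<Rightarrow> ('a::field mat \<Rightarrow> 'a mat) \<Rightarrow> bool" where
  "linear_mat_map n r \<Phi> \<longleftrightarrow>
     (\<forall>A \<in> carrier_mat n n. \<Phi> A \<in> carrier_mat r r) \<and>
     (\<forall>A \<in> carrier_mat n n. \<forall>B \<in> carrier_mat n n. \<Phi> (A + B) = \<Phi> A + \<Phi> B) \<and>
     (\<forall>c. \<forall>A \<in> carrier_mat n n. \<Phi> (c \<cdot>\<^sub>m A) = c \<cdot>\<^sub>m \<Phi> A)"

definition preserves_zero_products :: "nat \<Rightarrow> nat \<Rightarrow> ('a::field mat \<Rightarrow> 'a mat) \<Rightarrow> bool" where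
  "preserves_zero_products n r \<Phi> \<longleftrightarrow>
     (\<forall>A \<in> carrier_mat n n. \<forall>B \<in> carrier_mat n n.
        A * B = 0\<^sub>m n n \<longrightarrow> \<Phi> A * \<Phi> B = 0\<^sub>m r r)"

definition algebra_hom_mat :: "nat \<Rightarrow> nat \<Rightarrow> ('a::field mat \<Rightarrow> 'a mat) \<Rightarrow> bool" where
  "algebra_hom_mat n r \<Phi> \<longleftrightarrow> linear_mat_map n r \<Phi> \<and>
     (\<forall>A \<in> carrier_mat n n. \<forall>B \<in> carrier_mat n n. \<Phi> (A * B) = \<Phi> A * \<Phi> B)"

end

theory Submission
  imports Defs "Jordan_Normal_Form.Determinant"
begin


lemma mult_entry_sum:
  assumes "A \<in> carrier_mat a b" "B \<in> carrier_mat b c" "i < a" "j < c"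
  shows "(A * B) $$ (i,j) = (\<Sum>l<b. A $$ (i,l) * B $$ (l,j))"
  using assms by (auto simp: scalar_prod_def lessThan_atLeast0 intro!: sum.cong)

lemma sum_if_less:
  fixes f :: "nat \<Rightarrow> 'a::comm_monoid_add"
  assumes "r \<le> N"
  shows "(\<Sum>l<N. if l < r then f l else 0) = (\<Sum>l<r. f l)"
proof -
  have "(\<Sum>l<N. if l < r then f l else 0) = (\<Sum>l<r. if l < r then f l else 0)"
    using assms by (intro sum.mono_neutral_right) auto
  thus ?thesis by simp
qed

lemma inv_dim_le:
  fixes S T :: "'a::field mat"
  assumes S: "S \<in> carrier_mat r N" and T: "T \<in> carrier_mat N r" and TS: "T * S = 1\<^sub>m N"
  shows "N \<le> r"
proof (rule ccontr)
  assume "\<not> N \<le> r"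
  hence rN: "r < N" by simp
  define S' where "S' = mat N N (\<lambda>(i,j). if i<r then S$$(i,j) else 0)"
  define T' where "T' = mat N N (\<lambda>(i,j). if j<r then T$$(i,j) else 0)"
  have S'c: "S' \<in> carrier_mat N N" and T'c: "T' \<in> carrier_mat N N" by (auto simp: S'_def T'_def)
  have "T' * S' = 1\<^sub>m N"
  proof (rule eq_matI)
    fix i j assume ij: "i < dim_row (1\<^sub>m N :: 'a mat)" "j < dim_col (1\<^sub>m N :: 'a mat)"
    have "(T' * S') $$ (i,j) = (\<Sum>l<N. T' $$ (i,l) * S' $$ (l,j))"
      using ij by (intro mult_entry_sum[OF T'c S'c]) auto
    also have "\<dots> = (\<Sum>l<N. if l < r then T $$ (i,l) * S $$ (l,j) else 0)"
      using ij by (intro sum.cong) (auto simp: S'_def T'_def)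
    also have "\<dots> = (\<Sum>l<r. T $$ (i,l) * S $$ (l,j))" using rN by (intro sum_if_less) simp
    also have "\<dots> = (T * S) $$ (i,j)" using ij by (intro mult_entry_sum[symmetric, OF T S]) auto
    finally show "(T' * S') $$ (i,j) = 1\<^sub>m N $$ (i,j)" using TS by simp
  qed (use S'c T'c in auto)
  hence "S' * T' = 1\<^sub>m N" by (rule mat_mult_left_right_inverse[OF T'c S'c])
  hence "(S' * T') $$ (N-1,N-1) = 1" using rN by simp
  moreover have "(S' * T') $$ (N-1,N-1) = 0"
  proof -
    have "(S' * T') $$ (N-1,N-1) = (\<Sum>l<N. S' $$ (N-1,l) * T' $$ (l,N-1))"
      using rN by (intro mult_entry_sum[OF S'c T'c]) auto
    also have "\<dots> = 0" using rN by (intro sum.neutral) (auto simp: S'_def)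
    finally show ?thesis .
  qed
  ultimately show False by simp
qed



definition indepJ :: "'a::field mat \<Rightarrow> nat \<Rightarrow> nat list \<Rightarrow> bool" where
  "indepJ Q r J \<longleftrightarrow> (\<forall>c::nat\<Rightarrow>'a. (\<forall>i<r. (\<Sum>t<length J. Q $$ (i, J!t) * c t) = 0) \<longrightarrow> (\<forall>t<length J. c t = 0))"

lemma sum_delta_mult:
  fixes f :: "nat \<Rightarrow> 'a::semiring_1"
  shows "(\<Sum>s<k. f s * (if s = t then 1 else 0)) = (if t < k then f t else 0)"
  by (induct k) (auto simp: less_Suc_eq)

lemma idem_factor:
  fixes Q :: "'a::field mat"
  assumes Q: "Q \<in> carrier_mat r r" and QQ: "Q * Q = Q"
  shows "\<exists>k X Y. X \<in> carrier_mat r k \<and> Y \<in> carrier_mat k r \<and> Y * X = 1\<^sub>m k \<and> X * Y = Q"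
proof -
  define good where "good J \<longleftrightarrow> distinct J \<and> set J \<subseteq> {..<r} \<and> indepJ Q r J" for J
  have g0: "good []" by (simp add: good_def indepJ_def)
  have bnd: "\<forall>J. good J \<longrightarrow> length J < Suc r"
  proof (intro allI impI)
    fix J assume "good J"
    hence "length J = card (set J)" "set J \<subseteq> {..<r}" by (auto simp: good_def distinct_card)
    moreover have "card (set J) \<le> card {..<r}" using \<open>set J \<subseteq> {..<r}\<close> by (intro card_mono) auto
    ultimately show "length J < Suc r" by simp
  qed
  obtain J where gJ: "good J" and maxJ: "\<And>J'. good J' \<Longrightarrow> length J' \<le> length J"
    using ex_has_greatest_nat[of good "[]" length "Suc r", OF g0 bnd] by blast
  define k where "k = length J"
  have Jr: "\<And>t. t < k \<Longrightarrow> J!t < r" using gJ unfolding good_def k_def by (meson lessThan_iff nth_mem subsetD)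
  have ind: "\<And>c. (\<forall>i<r. (\<Sum>t<k. Q $$ (i, J!t) * c t) = 0) \<Longrightarrow> (\<forall>t<k. c t = 0)"
    using gJ by (auto simp: good_def indepJ_def k_def)
  have span: "\<exists>c. \<forall>i<r. Q $$ (i,j) = (\<Sum>t<k. Q $$ (i, J!t) * c t)" if j: "j < r" for j
  proof (rule ccontr)
    assume ns: "\<not> ?thesis"
    have nin: "j \<notin> set J"
    proof
      assume "j \<in> set J"
      then obtain t where t: "t < k" "J!t = j" by (auto simp: in_set_conv_nth k_def)
      have "\<exists>c. \<forall>i<r. Q $$ (i,j) = (\<Sum>s<k. Q $$ (i, J!s) * c s)"
        by (rule exI[of _ "\<lambda>s. if s = t then 1 else 0"]) (use t in \<open>simp add: sum_delta_mult\<close>)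
      with ns show False by blast
    qed
    have "good (J @ [j])"
      unfolding good_def
    proof (intro conjI)
      show "distinct (J @ [j])" using gJ nin by (auto simp: good_def)
      show "set (J @ [j]) \<subseteq> {..<r}" using gJ j by (auto simp: good_def)
      show "indepJ Q r (J @ [j])" unfolding indepJ_def
      proof (rule allI, rule impI)
        fix c :: "nat \<Rightarrow> 'a"
        assume h: "\<forall>i<r. (\<Sum>t<length (J @ [j]). Q $$ (i, (J @ [j]) ! t) * c t) = 0"
        have h2: "\<forall>i<r. (\<Sum>t<k. Q $$ (i, J!t) * c t) + Q $$ (i,j) * c k = 0"
        proof (intro allI impI)
          fix i assume "i < r"
          with h have "(\<Sum>t<Suc k. Q $$ (i, (J @ [j]) ! t) * c t) = 0" by (simp add: k_def)
          moreover have "(\<Sum>t<k. Q $$ (i, (J @ [j]) ! t) * c t) = (\<Sum>t<k. Q $$ (i, J!t) * c t)"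
            by (intro sum.cong) (auto simp: nth_append k_def)
          ultimately show "(\<Sum>t<k. Q $$ (i, J!t) * c t) + Q $$ (i,j) * c k = 0"
            by (simp add: k_def)
        qed
        have ck: "c k = 0"
        proof (rule ccontr)
          assume ck: "c k \<noteq> 0"
          have "\<forall>i<r. Q $$ (i,j) = (\<Sum>t<k. Q $$ (i, J!t) * (\<lambda>t. - c t / c k) t)"
          proof (intro allI impI)
            fix i assume "i < r"
            with h2 have e: "Q $$ (i,j) * c k = - (\<Sum>t<k. Q $$ (i, J!t) * c t)"
              by (simp add: eq_neg_iff_add_eq_0 add.commute)
            have "(\<Sum>t<k. Q $$ (i, J!t) * (- c t / c k)) = - (\<Sum>t<k. Q $$ (i, J!t) * c t) / c k"
              by (simp add: sum_divide_distrib sum_negf)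
            also have "\<dots> = Q $$ (i,j)" using ck by (simp add: e[symmetric])
            finally show "Q $$ (i,j) = (\<Sum>t<k. Q $$ (i, J!t) * (\<lambda>t. - c t / c k) t)" by simp
          qed
          hence "\<exists>c. \<forall>i<r. Q $$ (i,j) = (\<Sum>t<k. Q $$ (i, J!t) * c t)" by (rule exI[of _ "\<lambda>t. - c t / c k"])
          with ns show False by blast
        qed
        have "\<forall>t<k. c t = 0" using h2 ck by (intro ind) simp
        with ck show "\<forall>t<length (J @ [j]). c t = 0" by (auto simp: k_def less_Suc_eq)
      qed
    qed
    from maxJ[OF this] show False by simp
  qed
  define C where "C j = (SOME c. \<forall>i<r. Q $$ (i,j) = (\<Sum>t<k. Q $$ (i, J!t) * c t))" for j
  have C0: "\<forall>i<r. Q $$ (i,j) = (\<Sum>t<k. Q $$ (i, J!t) * C j t)" if "j < r" for j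
    unfolding C_def by (rule someI_ex[OF span[OF that]])
  have C: "\<And>i j. i < r \<Longrightarrow> j < r \<Longrightarrow> Q $$ (i,j) = (\<Sum>t<k. Q $$ (i, J!t) * C j t)"
    using C0 by blast
  define X where "X = mat r k (\<lambda>(i,t). Q $$ (i, J!t))"
  define Y where "Y = mat k r (\<lambda>(t,j). C j t)"
  have Xc: "X \<in> carrier_mat r k" and Yc: "Y \<in> carrier_mat k r" by (auto simp: X_def Y_def)
  have XY: "X * Y = Q"
  proof (rule eq_matI)
    fix i j assume "i < dim_row Q" "j < dim_col Q"
    hence ij: "i < r" "j < r" using Q by auto
    have "(X * Y) $$ (i,j) = (\<Sum>t<k. X $$ (i,t) * Y $$ (t,j))" using ij by (intro mult_entry_sum[OF Xc Yc])
    also have "\<dots> = (\<Sum>t<k. Q $$ (i, J!t) * C j t)" using ij by (intro sum.cong) (auto simp: X_def Y_def)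
    finally show "(X * Y) $$ (i,j) = Q $$ (i,j)" using C[OF ij] by simp
  qed (use Xc Yc Q in auto)
  have QX: "Q * X = X"
  proof (rule eq_matI)
    fix i t assume "i < dim_row X" "t < dim_col X"
    hence it: "i < r" "t < k" using Xc by auto
    have "(Q * X) $$ (i,t) = (\<Sum>l<r. Q $$ (i,l) * X $$ (l,t))" using it by (intro mult_entry_sum[OF Q Xc])
    also have "\<dots> = (\<Sum>l<r. Q $$ (i,l) * Q $$ (l,J!t))" using it by (intro sum.cong) (auto simp: X_def)
    also have "\<dots> = (Q * Q) $$ (i, J!t)" using it Jr by (intro mult_entry_sum[symmetric, OF Q Q]) auto
    finally show "(Q * X) $$ (i,t) = X $$ (i,t)" using QQ it Jr by (simp add: X_def)
  qed (use Xc Q in auto)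
  have YXc: "Y * X \<in> carrier_mat k k" using Xc Yc by auto
  have "X * (Y * X) = X" using QX XY Xc Yc by (metis assoc_mult_mat)
  have YX: "Y * X = 1\<^sub>m k"
  proof (rule eq_matI)
    fix t s assume "t < dim_row (1\<^sub>m k :: 'a mat)" "s < dim_col (1\<^sub>m k :: 'a mat)"
    hence ts: "t < k" "s < k" by auto
    define c where "c u = (Y * X) $$ (u,s) - (if u = s then 1 else 0)" for u
    have "\<forall>i<r. (\<Sum>u<k. Q $$ (i, J!u) * c u) = 0"
    proof (intro allI impI)
      fix i assume i: "i < r"
      have "(\<Sum>u<k. Q $$ (i, J!u) * c u) = (\<Sum>u<k. X $$ (i,u) * (Y * X) $$ (u,s)) - (\<Sum>u<k. X $$ (i,u) * (if u = s then 1 else 0))"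
        using i by (simp add: c_def X_def right_diff_distrib sum_subtractf)
      also have "(\<Sum>u<k. X $$ (i,u) * (Y * X) $$ (u,s)) = (X * (Y * X)) $$ (i,s)"
        using i ts by (intro mult_entry_sum[symmetric, OF Xc YXc])
      also have "\<dots> = X $$ (i,s)" using \<open>X * (Y * X) = X\<close> by simp
      also have "(\<Sum>u<k. X $$ (i,u) * (if u = s then 1 else 0)) = X $$ (i,s)"
        using ts by (simp add: sum_delta_mult)
      finally show "(\<Sum>u<k. Q $$ (i, J!u) * c u) = 0" by simp
    qed
    from ind[OF this] ts have "c t = 0" by blast
    thus "(Y * X) $$ (t,s) = 1\<^sub>m k $$ (t,s)" using ts by (simp add: c_def)
  qed (use YXc in auto)
  show ?thesis using Xc Yc XY YX by blast
qed



definition umat :: "nat \<Rightarrow> nat \<Rightarrow> nat \<Rightarrow> 'a::field mat" where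
  "umat n a b = mat n n (\<lambda>(i,j). if i = a \<and> j = b then 1 else 0)"

lemma umat_carrier[simp]: "umat n a b \<in> carrier_mat n n" by (simp add: umat_def)

lemma umat_dims[simp]: "dim_row (umat n a b) = n" "dim_col (umat n a b) = n" by (simp_all add: umat_def)

lemma umat_index[simp]: "i < n \<Longrightarrow> j < n \<Longrightarrow> umat n a b $$ (i,j) = (if i = a \<and> j = b then 1 else 0)"
  by (simp add: umat_def)

lemma umat_mult: assumes "b < n" "c < n"
  shows "umat n a b * (umat n c d :: 'a::field mat) = (if b = c then umat n a d else 0\<^sub>m n n)"
proof (rule eq_matI)
  fix i j assume ij: "i < dim_row (if b = c then umat n a d else 0\<^sub>m n n :: 'a mat)"
    "j < dim_col (if b = c then umat n a d else 0\<^sub>m n n :: 'a mat)"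
  hence ij': "i < n" "j < n" by (auto split: if_splits)
  have "(umat n a b * umat n c d) $$ (i,j) = (\<Sum>l<n. umat n a b $$ (i,l) * (umat n c d :: 'a mat) $$ (l,j))"
    using ij' by (intro mult_entry_sum) auto
  also have "\<dots> = (\<Sum>l<n. if l = b then (if i = a \<and> b = c \<and> j = d then 1 else 0) else 0)"
    using ij' by (intro sum.cong) auto
  also have "\<dots> = (if i = a \<and> b = c \<and> j = d then 1 else 0)" using assms by simp
  finally show "(umat n a b * umat n c d) $$ (i,j) = (if b = c then umat n a d else 0\<^sub>m n n :: 'a mat) $$ (i,j)"
    using ij' by auto
qed (auto)

fun msum :: "nat \<Rightarrow> ('b \<Rightarrow> 'a::field mat) \<Rightarrow> 'b list \<Rightarrow> 'a mat" where
  "msum r f [] = 0\<^sub>m r r"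
| "msum r f (x # xs) = f x + msum r f xs"

lemma msum_carrier: "(\<And>x. x \<in> set xs \<Longrightarrow> f x \<in> carrier_mat r r) \<Longrightarrow> msum r f xs \<in> carrier_mat r r"
  by (induct xs) auto

lemma msum_index: "(\<And>x. x \<in> set xs \<Longrightarrow> f x \<in> carrier_mat r r) \<Longrightarrow> i < r \<Longrightarrow> j < r \<Longrightarrow>
   msum r f xs $$ (i,j) = sum_list (map (\<lambda>x. f x $$ (i,j)) xs)"
proof (induct xs)
  case (Cons x xs)
  have "msum r f xs \<in> carrier_mat r r" using Cons by (intro msum_carrier) auto
  thus ?case using Cons by auto
qed auto

lemma msum_cong: "(\<And>x. x \<in> set xs \<Longrightarrow> f x = g x) \<Longrightarrow> msum r f xs = msum r g xs"
  by (induct xs) auto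

lemma lin_carrier: "linear_mat_map n r \<Phi> \<Longrightarrow> A \<in> carrier_mat n n \<Longrightarrow> \<Phi> A \<in> carrier_mat r r"
  unfolding linear_mat_map_def by blast
lemma lin_add: "linear_mat_map n r \<Phi> \<Longrightarrow> A \<in> carrier_mat n n \<Longrightarrow> B \<in> carrier_mat n n \<Longrightarrow> \<Phi> (A + B) = \<Phi> A + \<Phi> B"
  unfolding linear_mat_map_def by blast
lemma lin_smult: "linear_mat_map n r \<Phi> \<Longrightarrow> A \<in> carrier_mat n n \<Longrightarrow> \<Phi> (c \<cdot>\<^sub>m A) = c \<cdot>\<^sub>m \<Phi> A"
  unfolding linear_mat_map_def by blast

lemma lin_zero: assumes "linear_mat_map n r \<Phi>" shows "\<Phi> (0\<^sub>m n n) = 0\<^sub>m r r"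
proof -
  have "\<Phi> (0\<^sub>m n n) = \<Phi> (0 \<cdot>\<^sub>m 0\<^sub>m n n)" by (intro arg_cong[where f=\<Phi>] eq_matI) auto
  also have "\<dots> = 0 \<cdot>\<^sub>m \<Phi> (0\<^sub>m n n)" using lin_smult[OF assms, of "0\<^sub>m n n" 0] by simp
  also have "\<dots> = 0\<^sub>m r r" using lin_carrier[OF assms, of "0\<^sub>m n n"] by (intro eq_matI) auto
  finally show ?thesis .
qed

lemma minus_as_smult: "A \<in> carrier_mat a b \<Longrightarrow> B \<in> carrier_mat a b \<Longrightarrow> A - B = A + (-1 :: 'a::field) \<cdot>\<^sub>m B"
  by (intro eq_matI) auto

lemma lin_minus: assumes "linear_mat_map n r \<Phi>" "A \<in> carrier_mat n n" "B \<in> carrier_mat n n"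
  shows "\<Phi> (A - B) = \<Phi> A - \<Phi> B"
proof -
  have "\<Phi> (A - B) = \<Phi> (A + (-1) \<cdot>\<^sub>m B)" using assms by (simp add: minus_as_smult)
  also have "\<dots> = \<Phi> A + (-1) \<cdot>\<^sub>m \<Phi> B" using assms by (simp add: lin_add lin_smult)
  also have "\<dots> = \<Phi> A - \<Phi> B" by (rule minus_as_smult[symmetric, OF lin_carrier[OF assms(1,2)] lin_carrier[OF assms(1,3)]])
  finally show ?thesis .
qed

lemma lin_msum: assumes "linear_mat_map n r \<Phi>" "\<And>x. x \<in> set xs \<Longrightarrow> f x \<in> carrier_mat n n"
  shows "\<Phi> (msum n f xs) = msum r (\<lambda>x. \<Phi> (f x)) xs"
  using assms(2)
proof (induct xs)
  case Nil thus ?case using lin_zero[OF assms(1)] by simp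
next
  case (Cons x xs)
  have "msum n f xs \<in> carrier_mat n n" using Cons by (intro msum_carrier) auto
  thus ?case using Cons lin_add[OF assms(1)] by auto
qed

definition pairs :: "nat \<Rightarrow> (nat \<times> nat) list" where "pairs n = List.product [0..<n] [0..<n]"

lemma pairs_set: "set (pairs n) = {0..<n} \<times> {0..<n}" by (simp add: pairs_def)
lemma pairs_distinct: "distinct (pairs n)" by (simp add: pairs_def distinct_product)

lemma mat_expand: assumes E: "E \<in> carrier_mat n n"
  shows "E = msum n (\<lambda>(a,b). E $$ (a,b) \<cdot>\<^sub>m (umat n a b :: 'a::field mat)) (pairs n)"
proof (rule eq_matI)
  have c: "\<And>x. x \<in> set (pairs n) \<Longrightarrow> (\<lambda>(a,b). E $$ (a,b) \<cdot>\<^sub>m (umat n a b :: 'a mat)) x \<in> carrier_mat n n"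
    by auto
  have mc: "msum n (\<lambda>(a,b). E $$ (a,b) \<cdot>\<^sub>m (umat n a b :: 'a mat)) (pairs n) \<in> carrier_mat n n"
    by (rule msum_carrier) auto
  show dims: "dim_row E = dim_row (msum n (\<lambda>(a,b). E $$ (a,b) \<cdot>\<^sub>m (umat n a b :: 'a mat)) (pairs n))"
    "dim_col E = dim_col (msum n (\<lambda>(a,b). E $$ (a,b) \<cdot>\<^sub>m (umat n a b :: 'a mat)) (pairs n))"
    using mc E by auto
  fix i j assume "i < dim_row (msum n (\<lambda>(a,b). E $$ (a,b) \<cdot>\<^sub>m (umat n a b :: 'a mat)) (pairs n))"
    "j < dim_col (msum n (\<lambda>(a,b). E $$ (a,b) \<cdot>\<^sub>m (umat n a b :: 'a mat)) (pairs n))"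
  hence ij: "i < n" "j < n" using mc by auto
  have "msum n (\<lambda>(a,b). E $$ (a,b) \<cdot>\<^sub>m (umat n a b :: 'a mat)) (pairs n) $$ (i,j)
     = sum_list (map (\<lambda>x. ((\<lambda>(a,b). E $$ (a,b) \<cdot>\<^sub>m (umat n a b :: 'a mat)) x) $$ (i,j)) (pairs n))"
    by (rule msum_index[OF c ij])
  also have "\<dots> = (\<Sum>x\<in>set (pairs n). ((\<lambda>(a,b). E $$ (a,b) \<cdot>\<^sub>m (umat n a b :: 'a mat)) x) $$ (i,j))"
    by (rule sum.distinct_set_conv_list[symmetric, OF pairs_distinct])
  also have "\<dots> = (\<Sum>x\<in>{0..<n} \<times> {0..<n}. if x = (i,j) then E $$ (i,j) else 0)"
    unfolding pairs_set using ij by (intro sum.cong) (auto split: if_splits)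
  also have "\<dots> = E $$ (i,j)" using ij by simp
  finally show "E $$ (i,j) = msum n (\<lambda>(a,b). E $$ (a,b) \<cdot>\<^sub>m (umat n a b :: 'a mat)) (pairs n) $$ (i,j)" by simp
qed

lemma lin_agree_units:
  assumes G: "linear_mat_map n r G" and H: "linear_mat_map n r H"
    and u: "\<And>a b. a < n \<Longrightarrow> b < n \<Longrightarrow> G (umat n a b) = H (umat n a b)"
    and E: "E \<in> carrier_mat n n"
  shows "G E = H E"
proof -
  let ?f = "\<lambda>(a,b). E $$ (a,b) \<cdot>\<^sub>m (umat n a b :: 'a mat)"
  have c: "\<And>x. x \<in> set (pairs n) \<Longrightarrow> ?f x \<in> carrier_mat n n" by auto
  have "G E = G (msum n ?f (pairs n))" using mat_expand[OF E] by simp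
  also have "\<dots> = msum r (\<lambda>x. G (?f x)) (pairs n)" by (rule lin_msum[OF G c])
  also have "\<dots> = msum r (\<lambda>x. H (?f x)) (pairs n)"
  proof (rule msum_cong)
    fix x assume "x \<in> set (pairs n)"
    then obtain a b where x: "x = (a,b)" "a < n" "b < n" by (auto simp: pairs_set)
    show "G (?f x) = H (?f x)" using x u lin_smult[OF G] lin_smult[OF H] by simp
  qed
  also have "\<dots> = H (msum n ?f (pairs n))" by (rule lin_msum[OF H c, symmetric])
  also have "\<dots> = H E" using mat_expand[OF E] by simp
  finally show ?thesis .
qed

lemma lin_agree_idem:
  assumes G: "linear_mat_map n r G" and H: "linear_mat_map n r H"
    and idm: "\<And>E. E \<in> carrier_mat n n \<Longrightarrow> E * E = E \<Longrightarrow> G E = H E"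
    and E: "E \<in> carrier_mat n n"
  shows "G E = H E"
proof (rule lin_agree_units[OF G H _ E])
  fix a b assume ab: "a < n" "b < n"
  have Uaa: "umat n a a * umat n a a = (umat n a a :: 'a mat)" using ab by (simp add: umat_mult)
  show "G (umat n a b) = H (umat n a b)"
  proof (cases "a = b")
    case True thus ?thesis using idm Uaa by simp
  next
    case False
    let ?F = "umat n a a + umat n a b :: 'a mat"
    have Fc: "?F \<in> carrier_mat n n" by simp
    have "?F * ?F = umat n a a * ?F + umat n a b * ?F"
      by (rule add_mult_distrib_mat) auto
    also have "\<dots> = (umat n a a * umat n a a + umat n a a * umat n a b) + (umat n a b * umat n a a + umat n a b * umat n a b)"
      by (simp add: mult_add_distrib_mat[OF umat_carrier umat_carrier umat_carrier])
    also have "\<dots> = ?F" using ab False by (simp add: umat_mult)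
    finally have "?F * ?F = ?F" .
    hence gF: "G ?F = H ?F" using idm Fc by blast
    have gU: "G (umat n a a) = H (umat n a a)" using idm Uaa by simp
    have eq: "umat n a b = ?F + (-1) \<cdot>\<^sub>m umat n a a" by (intro eq_matI) auto
    have "G (umat n a b) = G ?F + (-1) \<cdot>\<^sub>m G (umat n a a)"
      by (subst eq) (simp add: lin_add[OF G] lin_smult[OF G] del: )
    also have "\<dots> = H ?F + (-1) \<cdot>\<^sub>m H (umat n a a)" using gF gU by simp
    also have "\<dots> = H (umat n a b)"
      by (subst eq) (simp add: lin_add[OF H] lin_smult[OF H])
    finally show ?thesis .
  qed
qed



lemma diff_zero_eq: assumes "X \<in> carrier_mat a b" "Y \<in> carrier_mat a b" "X - Y = 0\<^sub>m a b"
  shows "X = (Y :: 'a::field mat)"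
proof (rule eq_matI)
  fix i j assume ij: "i < dim_row Y" "j < dim_col Y"
  have "(X - Y) $$ (i,j) = 0" using assms ij by simp
  thus "X $$ (i,j) = Y $$ (i,j)" using ij by simp
qed (use assms in auto)

lemma key_idem:
  fixes \<Phi> :: "'a::field mat \<Rightarrow> 'a mat"
  assumes lin: "linear_mat_map n r \<Phi>" and zp: "preserves_zero_products n r \<Phi>"
    and A: "A \<in> carrier_mat n n" and B: "B \<in> carrier_mat n n" and E: "E \<in> carrier_mat n n"
    and EE: "E * E = E"
  shows "\<Phi> (A * E) * \<Phi> B = \<Phi> A * \<Phi> (E * B)"
proof -
  have I: "1\<^sub>m n \<in> carrier_mat n n" by simp
  have IE: "1\<^sub>m n - E \<in> carrier_mat n n" using E by (rule minus_carrier_mat)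
  have E1: "E * (1\<^sub>m n - E) = 0\<^sub>m n n"
    using E EE by (simp add: mult_minus_distrib_mat[OF E I E])
  have E2: "(1\<^sub>m n - E) * E = 0\<^sub>m n n"
    using E EE by (simp add: minus_mult_distrib_mat[OF I E E])
  have AE: "A * E \<in> carrier_mat n n" and EB: "E * B \<in> carrier_mat n n" using A B E by auto
  have c1: "(1\<^sub>m n - E) * B \<in> carrier_mat n n" using B E by (auto intro: minus_carrier_mat)
  have c2: "A * (1\<^sub>m n - E) \<in> carrier_mat n n" using A E by (auto intro: minus_carrier_mat)
  have z1: "(A * E) * ((1\<^sub>m n - E) * B) = 0\<^sub>m n n"
  proof -
    have "(A * E) * ((1\<^sub>m n - E) * B) = A * (E * ((1\<^sub>m n - E) * B))"
      using A E c1 by (simp)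
    also have "E * ((1\<^sub>m n - E) * B) = (E * (1\<^sub>m n - E)) * B"
      using assoc_mult_mat[OF E IE B] by simp
    finally show ?thesis using E1 A B by (simp add: left_mult_zero_mat right_mult_zero_mat)
  qed
  have z2: "(A * (1\<^sub>m n - E)) * (E * B) = 0\<^sub>m n n"
  proof -
    have "(A * (1\<^sub>m n - E)) * (E * B) = A * (((1\<^sub>m n - E) * E) * B)"
      using assoc_mult_mat[OF A IE mult_carrier_mat[OF E B]] assoc_mult_mat[OF IE E B] by simp
    thus ?thesis using E2 A B by (simp add: left_mult_zero_mat right_mult_zero_mat)
  qed
  have p1: "\<Phi> (A * E) * \<Phi> ((1\<^sub>m n - E) * B) = 0\<^sub>m r r"
    using zp AE c1 z1 unfolding preserves_zero_products_def by blast
  have p2: "\<Phi> (A * (1\<^sub>m n - E)) * \<Phi> (E * B) = 0\<^sub>m r r"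
    using zp c2 EB z2 unfolding preserves_zero_products_def by blast
  have q1: "(1\<^sub>m n - E) * B = B - E * B" using E B by (simp add: minus_mult_distrib_mat[OF I E B])
  have q2: "A * (1\<^sub>m n - E) = A - A * E" using A E by (simp add: mult_minus_distrib_mat[OF A I E])
  have PA: "\<Phi> A \<in> carrier_mat r r" and PB: "\<Phi> B \<in> carrier_mat r r"
    and PAE: "\<Phi> (A*E) \<in> carrier_mat r r" and PEB: "\<Phi> (E*B) \<in> carrier_mat r r"
    using lin_carrier[OF lin] A B AE EB by auto
  have "\<Phi> (A * E) * (\<Phi> B - \<Phi> (E * B)) = 0\<^sub>m r r"
    using p1 q1 lin_minus[OF lin B EB] by simp
  hence "\<Phi> (A * E) * \<Phi> B - \<Phi> (A * E) * \<Phi> (E * B) = 0\<^sub>m r r"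
    by (simp add: mult_minus_distrib_mat[OF PAE PB PEB])
  hence r1: "\<Phi> (A * E) * \<Phi> B = \<Phi> (A * E) * \<Phi> (E * B)"
    by (rule diff_zero_eq[rotated 2]) (use PAE PB PEB in auto)
  have "(\<Phi> A - \<Phi> (A * E)) * \<Phi> (E * B) = 0\<^sub>m r r"
    using p2 q2 lin_minus[OF lin A AE] by simp
  hence "\<Phi> A * \<Phi> (E * B) - \<Phi> (A * E) * \<Phi> (E * B) = 0\<^sub>m r r"
    by (simp add: minus_mult_distrib_mat[OF PA PAE PEB])
  hence r2: "\<Phi> A * \<Phi> (E * B) = \<Phi> (A * E) * \<Phi> (E * B)"
    by (rule diff_zero_eq[rotated 2]) (use PA PAE PEB in auto)
  show ?thesis using r1 r2 by simp
qed

lemma key: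
  fixes \<Phi> :: "'a::field mat \<Rightarrow> 'a mat"
  assumes lin: "linear_mat_map n r \<Phi>" and zp: "preserves_zero_products n r \<Phi>"
    and A: "A \<in> carrier_mat n n" and B: "B \<in> carrier_mat n n" and E: "E \<in> carrier_mat n n"
  shows "\<Phi> (A * E) * \<Phi> B = \<Phi> A * \<Phi> (E * B)"
proof -
  let ?G = "\<lambda>E. \<Phi> (A * E) * \<Phi> B"
  let ?H = "\<lambda>E. \<Phi> A * \<Phi> (E * B)"
  have PB: "\<Phi> B \<in> carrier_mat r r" and PA: "\<Phi> A \<in> carrier_mat r r" using lin_carrier[OF lin] A B by auto
  have G: "linear_mat_map n r ?G" unfolding linear_mat_map_def
  proof (intro conjI ballI allI)
    fix X :: "'a mat" assume X: "X \<in> carrier_mat n n"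
    show "?G X \<in> carrier_mat r r" using mult_carrier_mat[OF lin_carrier[OF lin mult_carrier_mat[OF A X]] PB] .
  next
    fix X Y :: "'a mat" assume X: "X \<in> carrier_mat n n" and Y: "Y \<in> carrier_mat n n"
    have c: "\<Phi> (A * X) \<in> carrier_mat r r" "\<Phi> (A * Y) \<in> carrier_mat r r" using lin_carrier[OF lin] A X Y by auto
    have "A * (X + Y) = A * X + A * Y" by (rule mult_add_distrib_mat[OF A X Y])
    hence "\<Phi> (A * (X + Y)) = \<Phi> (A * X) + \<Phi> (A * Y)" using lin_add[OF lin] A X Y by simp
    thus "?G (X + Y) = ?G X + ?G Y" by (simp add: add_mult_distrib_mat[OF c PB])
  next
    fix c and X :: "'a mat" assume X: "X \<in> carrier_mat n n"
    have cc: "\<Phi> (A * X) \<in> carrier_mat r r" using lin_carrier[OF lin] A X by auto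
    have "A * (c \<cdot>\<^sub>m X) = c \<cdot>\<^sub>m (A * X)" by (rule mult_smult_distrib[OF A X])
    hence "\<Phi> (A * (c \<cdot>\<^sub>m X)) = c \<cdot>\<^sub>m \<Phi> (A * X)" using lin_smult[OF lin] A X by simp
    thus "?G (c \<cdot>\<^sub>m X) = c \<cdot>\<^sub>m ?G X" by (simp add: mult_smult_assoc_mat[OF cc PB])
  qed
  have H: "linear_mat_map n r ?H" unfolding linear_mat_map_def
  proof (intro conjI ballI allI)
    fix X :: "'a mat" assume X: "X \<in> carrier_mat n n"
    show "?H X \<in> carrier_mat r r" using mult_carrier_mat[OF PA lin_carrier[OF lin mult_carrier_mat[OF X B]]] .
  next
    fix X Y :: "'a mat" assume X: "X \<in> carrier_mat n n" and Y: "Y \<in> carrier_mat n n"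
    have c: "\<Phi> (X * B) \<in> carrier_mat r r" "\<Phi> (Y * B) \<in> carrier_mat r r" using lin_carrier[OF lin] B X Y by auto
    have "(X + Y) * B = X * B + Y * B" by (rule add_mult_distrib_mat[OF X Y B])
    hence "\<Phi> ((X + Y) * B) = \<Phi> (X * B) + \<Phi> (Y * B)" using lin_add[OF lin] B X Y by simp
    thus "?H (X + Y) = ?H X + ?H Y" by (simp add: mult_add_distrib_mat[OF PA c])
  next
    fix c and X :: "'a mat" assume X: "X \<in> carrier_mat n n"
    have cc: "\<Phi> (X * B) \<in> carrier_mat r r" using lin_carrier[OF lin] B X by auto
    have "(c \<cdot>\<^sub>m X) * B = c \<cdot>\<^sub>m (X * B)" by (rule mult_smult_assoc_mat[OF X B])
    hence "\<Phi> ((c \<cdot>\<^sub>m X) * B) = c \<cdot>\<^sub>m \<Phi> (X * B)" using lin_smult[OF lin] B X by simp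
    thus "?H (c \<cdot>\<^sub>m X) = c \<cdot>\<^sub>m ?H X" by (simp add: mult_smult_distrib[OF PA cc])
  qed
  show ?thesis
    by (rule lin_agree_idem[OF G H _ E]) (rule key_idem[OF lin zp A B])
qed



lemma sum_split: fixes b :: nat shows "(\<Sum>c<a+b. f c) = (\<Sum>c<a. f c) + (\<Sum>c<b. (f (a+c) :: 'a::comm_monoid_add))"
  by (induct b) (simp_all add: add.assoc)

lemma sum_blocks: fixes k n :: nat shows "(\<Sum>c<k*n. f c) = (\<Sum>t<k. \<Sum>a<n. (f (t*n+a) :: 'a::comm_monoid_add))"
proof (induct k)
  case (Suc k)
  have "(\<Sum>c<Suc k * n. f c) = (\<Sum>c<k*n + n. f c)" by (simp add: add.commute)
  also have "\<dots> = (\<Sum>c<k*n. f c) + (\<Sum>a<n. f (k*n+a))" by (rule sum_split)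
  finally show ?case using Suc by simp
qed simp

lemma kron_dims: assumes A: "A \<in> carrier_mat n n"
  shows "kron_id k A \<in> carrier_mat (k*n) (k*n)"
  using A unfolding kron_id_def Let_def carrier_mat_def by simp

lemma kron_index: assumes A: "A \<in> carrier_mat n n" and c: "c < k*n" and d: "d < k*n"
  shows "kron_id k A $$ (c,d) = (if c div n = d div n then A $$ (c mod n, d mod n) else 0)"
proof -
  have dA: "dim_row A = n" using A by simp
  have "kron_id k A = mat (k * n) (k * n) (\<lambda>(i, j). if i div n = j div n then A $$ (i mod n, j mod n) else 0)"
    unfolding kron_id_def Let_def dA by (rule refl)
  thus ?thesis using c d by simp
qed

lemma padded_index: assumes A: "A \<in> carrier_mat n n" and kn: "k*n \<le> r" and c: "c < r" and d: "d < r"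
  shows "padded_kron_id r k A $$ (c,d) = (if c < k*n \<and> d < k*n \<and> c div n = d div n then A $$ (c mod n, d mod n) else 0)"
proof -
  have dr: "dim_row A = n" using A by simp
  have K: "kron_id k A \<in> carrier_mat (k*n) (k*n)" by (rule kron_dims[OF A])
  have e: "padded_kron_id r k A = four_block_mat (kron_id k A) (0\<^sub>m (k*n) (r - k*n)) (0\<^sub>m (r - k*n) (k*n)) (0\<^sub>m (r - k*n) (r - k*n))"
    by (simp add: padded_kron_id_def dr Let_def)
  have Kd: "dim_row (kron_id k A) = k*n" "dim_col (kron_id k A) = k*n" using K by auto
  have "padded_kron_id r k A $$ (c,d) = (if c < k*n then
      if d < k*n then kron_id k A $$ (c,d) else (0\<^sub>m (k*n) (r - k*n) :: 'a mat) $$ (c,d - k*n)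
      else if d < k*n then (0\<^sub>m (r - k*n) (k*n) :: 'a mat) $$ (c - k*n, d) else (0\<^sub>m (r - k*n) (r - k*n) :: 'a mat) $$ (c - k*n, d - k*n))"
    unfolding e by (subst index_mat_four_block(1)) (use Kd kn c d in auto)
  also have "\<dots> = (if c < k*n \<and> d < k*n \<and> c div n = d div n then A $$ (c mod n, d mod n) else 0)"
    using kron_index[OF A, of c k d] c d kn by (auto simp: less_diff_conv2 less_diff_conv)
  finally show ?thesis .
qed

lemma padded_carrier: assumes A: "A \<in> carrier_mat n n" and kn: "k*n \<le> r"
  shows "padded_kron_id r k A \<in> carrier_mat r r"
proof -
  have dr: "dim_row A = n" using A by simp
  have K: "kron_id k A \<in> carrier_mat (k*n) (k*n)" by (rule kron_dims[OF A])
  have "four_block_mat (kron_id k A) (0\<^sub>m (k*n) (r - k*n)) (0\<^sub>m (r - k*n) (k*n)) (0\<^sub>m (r - k*n) (r - k*n))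
     \<in> carrier_mat (k*n + (r - k*n)) (k*n + (r - k*n))"
    by (rule four_block_carrier_mat[OF K zero_carrier_mat])
  moreover have "k*n + (r - k*n) = r" using kn by simp
  ultimately show ?thesis unfolding padded_kron_id_def Let_def dr by simp
qed

lemma padded_full: assumes A: "A \<in> carrier_mat n n" and r: "r = k*n"
  shows "padded_kron_id r k A = kron_id k A"
proof (rule eq_matI)
  have K: "kron_id k A \<in> carrier_mat (k*n) (k*n)" by (rule kron_dims[OF A])
  have Pc: "padded_kron_id r k A \<in> carrier_mat r r" by (rule padded_carrier[OF A]) (simp add: r)
  show "dim_row (padded_kron_id r k A) = dim_row (kron_id k A)"
       "dim_col (padded_kron_id r k A) = dim_col (kron_id k A)" using K Pc r by auto
  fix i j assume "i < dim_row (kron_id k A)" "j < dim_col (kron_id k A)"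
  hence ij: "i < k*n" "j < k*n" using K by auto
  show "padded_kron_id r k A $$ (i,j) = kron_id k A $$ (i,j)"
    using padded_index[OF A, of k r i j] kron_index[OF A ij] ij unfolding r by simp
qed


lemma lin_left: assumes lin: "linear_mat_map n r \<Phi>" and M: "M \<in> carrier_mat r r"
  shows "linear_mat_map n r (\<lambda>A. M * \<Phi> A)"
  unfolding linear_mat_map_def
proof (intro conjI ballI allI)
  fix X :: "'a mat" assume X: "X \<in> carrier_mat n n"
  show "M * \<Phi> X \<in> carrier_mat r r" using M lin_carrier[OF lin X] by simp
next
  fix X Y :: "'a mat" assume X: "X \<in> carrier_mat n n" and Y: "Y \<in> carrier_mat n n"
  show "M * \<Phi> (X + Y) = M * \<Phi> X + M * \<Phi> Y"
    using lin_add[OF lin X Y] mult_add_distrib_mat[OF M lin_carrier[OF lin X] lin_carrier[OF lin Y]] by simp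
next
  fix c and X :: "'a mat" assume X: "X \<in> carrier_mat n n"
  show "M * \<Phi> (c \<cdot>\<^sub>m X) = c \<cdot>\<^sub>m (M * \<Phi> X)"
    using lin_smult[OF lin X] mult_smult_distrib[OF M lin_carrier[OF lin X]] by simp
qed



lemma lin_entry:
  fixes \<psi> :: "'a::field mat \<Rightarrow> 'a mat"
  assumes lin: "linear_mat_map n r \<psi>" and M: "M \<in> carrier_mat n n" and ij: "i < r" "j < r"
  shows "\<psi> M $$ (i,j) = (\<Sum>a<n. \<Sum>b<n. M $$ (a,b) * \<psi> (umat n a b) $$ (i,j))"
proof -
  let ?f = "\<lambda>(a,b). M $$ (a,b) \<cdot>\<^sub>m (umat n a b :: 'a mat)"
  have c: "\<And>x. x \<in> set (pairs n) \<Longrightarrow> ?f x \<in> carrier_mat n n" by auto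
  have c2: "\<And>x. x \<in> set (pairs n) \<Longrightarrow> \<psi> (?f x) \<in> carrier_mat r r"
    using lin_carrier[OF lin] c by blast
  have "\<psi> (msum n ?f (pairs n)) = msum r (\<lambda>x. \<psi> (?f x)) (pairs n)"
    by (rule lin_msum[OF lin]) auto
  hence "\<psi> M = msum r (\<lambda>x. \<psi> (?f x)) (pairs n)"
    using mat_expand[OF M] by simp
  hence "\<psi> M $$ (i,j) = sum_list (map (\<lambda>x. \<psi> (?f x) $$ (i,j)) (pairs n))"
    using msum_index[OF c2 ij] by simp
  also have "\<dots> = (\<Sum>x\<in>set (pairs n). \<psi> (?f x) $$ (i,j))"
    by (rule sum.distinct_set_conv_list[symmetric, OF pairs_distinct])
  also have "\<dots> = (\<Sum>x\<in>{0..<n} \<times> {0..<n}. (\<lambda>(a,b). M $$ (a,b) * \<psi> (umat n a b) $$ (i,j)) x)"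
    unfolding pairs_set
  proof (rule sum.cong[OF refl])
    fix x assume "x \<in> {0..<n} \<times> {0..<n}"
    then obtain a b where x: "x = (a,b)" by auto
    have "\<psi> (umat n a b) \<in> carrier_mat r r" using lin_carrier[OF lin umat_carrier] .
    hence d: "dim_row (\<psi> (umat n a b)) = r" "dim_col (\<psi> (umat n a b)) = r" by auto
    show "\<psi> (?f x) $$ (i,j) = (\<lambda>(a,b). M $$ (a,b) * \<psi> (umat n a b) $$ (i,j)) x"
      using x lin_smult[OF lin umat_carrier] d ij by simp
  qed
  also have "\<dots> = (\<Sum>a<n. \<Sum>b<n. M $$ (a,b) * \<psi> (umat n a b) $$ (i,j))"
    by (simp add: sum.cartesian_product lessThan_atLeast0)
  finally show ?thesis .
qed

lemma assoc_mid: assumes A: "A \<in> carrier_mat a b" and B: "B \<in> carrier_mat b c"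
  and C: "C \<in> carrier_mat c d" and D: "D \<in> carrier_mat d e"
  shows "A * B * (C * D) = A * (B * C) * (D :: 'f::semiring_0 mat)"
proof -
  have "A * B * (C * D) = A * (B * (C * D))" using assoc_mult_mat[OF A B mult_carrier_mat[OF C D]] .
  also have "B * (C * D) = B * C * D" using assoc_mult_mat[OF B C D] by simp
  also have "A * (B * C * D) = A * (B * C) * D" using assoc_mult_mat[OF A mult_carrier_mat[OF B C] D] by simp
  finally show ?thesis .
qed

lemma self_minus: "X \<in> carrier_mat a b \<Longrightarrow> X - X = (0\<^sub>m a b :: 'a::field mat)"
  by (intro eq_matI) auto

locale hrep =
  fixes n r :: nat and \<psi> :: "'a::field mat \<Rightarrow> 'a mat" and k m :: nat and X1 Y1 X2 Y2 :: "'a mat"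
  assumes lin: "linear_mat_map n r \<psi>"
    and mult: "\<And>A B. A \<in> carrier_mat n n \<Longrightarrow> B \<in> carrier_mat n n \<Longrightarrow> \<psi> (A * B) = \<psi> A * \<psi> B"
    and n0: "0 < n"
    and X1: "X1 \<in> carrier_mat r k" and Y1: "Y1 \<in> carrier_mat k r"
    and Y1X1: "Y1 * X1 = 1\<^sub>m k" and X1Y1: "X1 * Y1 = \<psi> (umat n 0 0)"
    and X2: "X2 \<in> carrier_mat r m" and Y2: "Y2 \<in> carrier_mat m r"
    and Y2X2: "Y2 * X2 = 1\<^sub>m m" and X2Y2: "X2 * Y2 = 1\<^sub>m r - \<psi> (1\<^sub>m n)"
begin

abbreviation "P \<equiv> \<psi> (1\<^sub>m n)"
abbreviation "R \<equiv> 1\<^sub>m r - P"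
abbreviation "U a b \<equiv> (umat n a b :: 'a mat)"
definition "V a = \<psi> (U a 0) * X1"
definition "W a = Y1 * \<psi> (U 0 a)"
abbreviation "N \<equiv> k * n + m"
definition "S = mat r N (\<lambda>(i,c). if c < k*n then V (c mod n) $$ (i, c div n) else X2 $$ (i, c - k*n))"
definition "T = mat N r (\<lambda>(c,j). if c < k*n then W (c mod n) $$ (c div n, j) else Y2 $$ (c - k*n, j))"

lemma psi_c: "A \<in> carrier_mat n n \<Longrightarrow> \<psi> A \<in> carrier_mat r r" using lin_carrier[OF lin] .
lemma P_c: "P \<in> carrier_mat r r" by (rule psi_c) simp
lemma R_c: "R \<in> carrier_mat r r" using P_c by (rule minus_carrier_mat)
lemma U_c: "\<psi> (U a b) \<in> carrier_mat r r" by (rule psi_c) simp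

lemma psiP: "A \<in> carrier_mat n n \<Longrightarrow> \<psi> A * P = \<psi> A"
  using mult[of A "1\<^sub>m n"] by simp
lemma Ppsi: "A \<in> carrier_mat n n \<Longrightarrow> P * \<psi> A = \<psi> A"
  using mult[of "1\<^sub>m n" A] by simp

lemma psiR: assumes A: "A \<in> carrier_mat n n" shows "\<psi> A * R = 0\<^sub>m r r"
proof -
  have "\<psi> A * R = \<psi> A * 1\<^sub>m r - \<psi> A * P"
    by (rule mult_minus_distrib_mat[OF psi_c[OF A] one_carrier_mat P_c])
  also have "\<dots> = \<psi> A - \<psi> A" using psiP[OF A] psi_c[OF A] by simp
  finally show ?thesis using self_minus[OF psi_c[OF A]] by simp
qed

lemma Rpsi: assumes A: "A \<in> carrier_mat n n" shows "R * \<psi> A = 0\<^sub>m r r"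
proof -
  have "R * \<psi> A = 1\<^sub>m r * \<psi> A - P * \<psi> A"
    by (rule minus_mult_distrib_mat[OF one_carrier_mat P_c psi_c[OF A]])
  also have "\<dots> = \<psi> A - \<psi> A" using Ppsi[OF A] psi_c[OF A] by simp
  finally show ?thesis using self_minus[OF psi_c[OF A]] by simp
qed

lemma RX2: "R * X2 = X2"
proof -
  have "R * X2 = X2 * Y2 * X2" using X2Y2 by simp
  also have "\<dots> = X2 * (Y2 * X2)" using X2 Y2 by simp
  finally show ?thesis using Y2X2 X2 by simp
qed

lemma Y2R: "Y2 * R = Y2"
proof -
  have "Y2 * R = Y2 * (X2 * Y2)" using X2Y2 by simp
  also have "\<dots> = Y2 * X2 * Y2" using X2 Y2 by simp
  finally show ?thesis using Y2X2 Y2 by simp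
qed

lemma psiX2: assumes A: "A \<in> carrier_mat n n" shows "\<psi> A * X2 = 0\<^sub>m r m"
proof -
  have "\<psi> A * X2 = \<psi> A * (R * X2)" using RX2 by simp
  also have "\<dots> = (\<psi> A * R) * X2" using psi_c[OF A] R_c X2 by simp
  finally show ?thesis using psiR[OF A] X2 by simp
qed

lemma Y2psi: assumes A: "A \<in> carrier_mat n n" shows "Y2 * \<psi> A = 0\<^sub>m m r"
proof -
  have "Y2 * \<psi> A = (Y2 * R) * \<psi> A" using Y2R by simp
  also have "\<dots> = Y2 * (R * \<psi> A)" using psi_c[OF A] R_c Y2 by simp
  finally show ?thesis using Rpsi[OF A] Y2 by simp
qed

lemma V_c: "V a \<in> carrier_mat r k" unfolding V_def by (rule mult_carrier_mat[OF U_c X1])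
lemma W_c: "W a \<in> carrier_mat k r" unfolding W_def by (rule mult_carrier_mat[OF Y1 U_c])

lemma WV: assumes a: "a < n" and b: "b < n"
  shows "W a * V b = (if a = b then 1\<^sub>m k else 0\<^sub>m k k)"
proof -
  have "W a * V b = Y1 * (\<psi> (U 0 a) * \<psi> (U b 0)) * X1"
    unfolding V_def W_def by (rule assoc_mid[OF Y1 U_c U_c X1])
  also have "\<psi> (U 0 a) * \<psi> (U b 0) = \<psi> (U 0 a * U b 0)" by (simp add: mult)
  also have "U 0 a * U b 0 = (if a = b then U 0 0 else 0\<^sub>m n n)" using a b by (simp add: umat_mult)
  finally have e: "W a * V b = Y1 * \<psi> (if a = b then U 0 0 else 0\<^sub>m n n) * X1" .
  show ?thesis
  proof (cases "a = b")
    case True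
    have "Y1 * \<psi> (U 0 0) * X1 = (Y1 * X1) * (Y1 * X1)"
      using X1Y1 assoc_mid[OF Y1 X1 Y1 X1] by simp
    thus ?thesis using e True Y1X1 by simp
  next
    case False
    thus ?thesis using e lin_zero[OF lin] Y1 X1 by (simp add: right_mult_zero_mat left_mult_zero_mat)
  qed
qed

lemma WX2: "W a * X2 = 0\<^sub>m k m"
  unfolding W_def using Y1 U_c[of 0 a] X2 psiX2[of "U 0 a"] by (simp add: right_mult_zero_mat)

lemma Y2V: "Y2 * V a = 0\<^sub>m m k"
proof -
  have "Y2 * V a = (Y2 * \<psi> (U a 0)) * X1" unfolding V_def using Y2 U_c[of a 0] X1 by simp
  thus ?thesis using Y2psi[of "U a 0"] X1 by (simp add: left_mult_zero_mat)
qed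

lemma VW: assumes a: "a < n" shows "V a * W a = \<psi> (U a a)"
proof -
  have "V a * W a = \<psi> (U a 0) * (X1 * Y1) * \<psi> (U 0 a)"
    unfolding V_def W_def by (rule assoc_mid[OF U_c X1 Y1 U_c])
  also have "\<dots> = \<psi> (U a 0 * U 0 0 * U 0 a)" using X1Y1
    mult[OF mult_carrier_mat[OF umat_carrier umat_carrier] umat_carrier, of a 0 0 0 0 a]
    mult[OF umat_carrier umat_carrier, of a 0 0 0] by simp
  also have "U a 0 * U 0 0 * U 0 a = U a a" using a n0 by (simp add: umat_mult)
  finally show ?thesis .
qed

end


context hrep begin

lemma P_entry: assumes ij: "i < r" "j < r"
  shows "P $$ (i,j) = (\<Sum>a<n. \<psi> (U a a) $$ (i,j))"
proof -
  have "P $$ (i,j) = (\<Sum>a<n. \<Sum>b<n. 1\<^sub>m n $$ (a,b) * \<psi> (U a b) $$ (i,j))"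
    by (rule lin_entry[OF lin one_carrier_mat ij])
  also have "\<dots> = (\<Sum>a<n. \<Sum>b<n. if a = b then \<psi> (U a b) $$ (i,j) else 0)"
    by (intro sum.cong refl) auto
  also have "\<dots> = (\<Sum>a<n. \<psi> (U a a) $$ (i,j))" by simp
  finally show ?thesis .
qed

lemma AV_entry: assumes A: "A \<in> carrier_mat n n" and b: "b < n" and i: "i < r" and s: "s < k"
  shows "(\<psi> A * V b) $$ (i,s) = (\<Sum>a<n. A $$ (a,b) * V a $$ (i,s))"
proof -
  define B where "B = A * U b 0"
  have Bc: "B \<in> carrier_mat n n" unfolding B_def using A by simp
  have B_entry: "B $$ (x,y) = (if y = 0 then A $$ (x,b) else 0)" if xy: "x < n" "y < n" for x y
  proof -
    have "B $$ (x,y) = (\<Sum>l<n. A $$ (x,l) * U b 0 $$ (l,y))"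
      unfolding B_def using xy by (intro mult_entry_sum[OF A umat_carrier])
    also have "\<dots> = (\<Sum>l<n. A $$ (x,l) * (if y = 0 then (if l = b then 1 else 0) else 0))"
      using xy by (intro sum.cong refl) auto
    also have "\<dots> = (if y = 0 then A $$ (x,b) else 0)"
      using b by (cases "y = 0") (simp_all add: sum_delta_mult)
    finally show ?thesis .
  qed
  have psiB: "\<psi> B $$ (i,l) = (\<Sum>x<n. A $$ (x,b) * \<psi> (U x 0) $$ (i,l))" if l: "l < r" for l
  proof -
    have "\<psi> B $$ (i,l) = (\<Sum>x<n. \<Sum>y<n. B $$ (x,y) * \<psi> (U x y) $$ (i,l))"
      by (rule lin_entry[OF lin Bc i l])
    also have "\<dots> = (\<Sum>x<n. \<Sum>y<n. if y = 0 then A $$ (x,b) * \<psi> (U x y) $$ (i,l) else 0)"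
      by (intro sum.cong refl) (auto simp: B_entry)
    also have "\<dots> = (\<Sum>x<n. A $$ (x,b) * \<psi> (U x 0) $$ (i,l))" using n0 by simp
    finally show ?thesis .
  qed
  have "\<psi> A * V b = \<psi> A * \<psi> (U b 0) * X1"
    unfolding V_def using assoc_mult_mat[OF psi_c[OF A] U_c X1] by simp
  also have "\<psi> A * \<psi> (U b 0) = \<psi> B" unfolding B_def by (rule mult[OF A umat_carrier, symmetric])
  finally have e: "\<psi> A * V b = \<psi> B * X1" .
  have "(\<psi> B * X1) $$ (i,s) = (\<Sum>l<r. \<psi> B $$ (i,l) * X1 $$ (l,s))"
    by (rule mult_entry_sum[OF psi_c[OF Bc] X1 i s])
  also have "\<dots> = (\<Sum>l<r. \<Sum>x<n. A $$ (x,b) * (\<psi> (U x 0) $$ (i,l) * X1 $$ (l,s)))"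
    by (intro sum.cong refl) (simp add: psiB sum_distrib_right mult.assoc)
  also have "\<dots> = (\<Sum>x<n. \<Sum>l<r. A $$ (x,b) * (\<psi> (U x 0) $$ (i,l) * X1 $$ (l,s)))"
    by (rule sum.swap)
  also have "\<dots> = (\<Sum>x<n. A $$ (x,b) * V x $$ (i,s))"
  proof (intro sum.cong refl)
    fix x assume "x \<in> {..<n}"
    have "V x $$ (i,s) = (\<Sum>l<r. \<psi> (U x 0) $$ (i,l) * X1 $$ (l,s))"
      unfolding V_def by (rule mult_entry_sum[OF U_c X1 i s])
    thus "(\<Sum>l<r. A $$ (x,b) * (\<psi> (U x 0) $$ (i,l) * X1 $$ (l,s))) = A $$ (x,b) * V x $$ (i,s)"
      by (simp add: sum_distrib_left)
  qed
  finally show ?thesis using e by simp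
qed

lemma div_mod_eq_iff: "(0::nat) < n \<Longrightarrow> (c = d) \<longleftrightarrow> (c div n = d div n \<and> c mod n = d mod n)"
  by (metis div_mult_mod_eq)

lemma S_c: "S \<in> carrier_mat r N" by (simp add: S_def)
lemma T_c: "T \<in> carrier_mat N r" by (simp add: T_def)

lemma TS: "T * S = 1\<^sub>m N"
proof (rule eq_matI)
  fix c d assume "c < dim_row (1\<^sub>m N :: 'a mat)" "d < dim_col (1\<^sub>m N :: 'a mat)"
  hence cd: "c < N" "d < N" by auto
  have "(T * S) $$ (c,d) = (\<Sum>i<r. T $$ (i,i) * 0) + (\<Sum>i<r. T $$ (c,i) * S $$ (i,d))" 
    using mult_entry_sum[OF T_c S_c cd] by simp
  hence e: "(T * S) $$ (c,d) = (\<Sum>i<r. T $$ (c,i) * S $$ (i,d))" by simp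
  show "(T * S) $$ (c,d) = 1\<^sub>m N $$ (c,d)"
  proof (cases "c < k*n")
    case c: True
    have ct: "c div n < k" using c by (simp add: less_mult_imp_div_less)
    have ca: "c mod n < n" using n0 by simp
    show ?thesis
    proof (cases "d < k*n")
      case d: True
      have dt: "d div n < k" using d by (simp add: less_mult_imp_div_less)
      have da: "d mod n < n" using n0 by simp
      have "(T * S) $$ (c,d) = (\<Sum>i<r. W (c mod n) $$ (c div n, i) * V (d mod n) $$ (i, d div n))"
        unfolding e using c d cd by (intro sum.cong refl) (simp add: S_def T_def)
      also have "\<dots> = (W (c mod n) * V (d mod n)) $$ (c div n, d div n)"
        by (rule mult_entry_sum[symmetric, OF W_c V_c ct dt])
      also have "\<dots> = (if c mod n = d mod n then 1\<^sub>m k else 0\<^sub>m k k) $$ (c div n, d div n)"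
        using WV[OF ca da] by simp
      also have "\<dots> = 1\<^sub>m N $$ (c,d)" using ct dt cd div_mod_eq_iff[OF n0, of c d] by auto
      finally show ?thesis .
    next
      case d: False
      have dm: "d - k*n < m" using cd d by simp
      have "(T * S) $$ (c,d) = (\<Sum>i<r. W (c mod n) $$ (c div n, i) * X2 $$ (i, d - k*n))"
        unfolding e using c d cd by (intro sum.cong refl) (simp add: S_def T_def)
      also have "\<dots> = (W (c mod n) * X2) $$ (c div n, d - k*n)"
        by (rule mult_entry_sum[symmetric, OF W_c X2 ct dm])
      also have "\<dots> = 0" using WX2 ct dm by simp
      finally show ?thesis using c d cd by simp
    qed
  next
    case c: False
    have cm: "c - k*n < m" using cd c by simp
    show ?thesis
    proof (cases "d < k*n")
      case d: True
      have dt: "d div n < k" using d by (simp add: less_mult_imp_div_less)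
      have "(T * S) $$ (c,d) = (\<Sum>i<r. Y2 $$ (c - k*n, i) * V (d mod n) $$ (i, d div n))"
        unfolding e using c d cd by (intro sum.cong refl) (simp add: S_def T_def)
      also have "\<dots> = (Y2 * V (d mod n)) $$ (c - k*n, d div n)"
        by (rule mult_entry_sum[symmetric, OF Y2 V_c cm dt])
      also have "\<dots> = 0" using Y2V cm dt by simp
      finally show ?thesis using c d cd by simp
    next
      case d: False
      have dm: "d - k*n < m" using cd d by simp
      have "(T * S) $$ (c,d) = (\<Sum>i<r. Y2 $$ (c - k*n, i) * X2 $$ (i, d - k*n))"
        unfolding e using c d cd by (intro sum.cong refl) (simp add: S_def T_def)
      also have "\<dots> = (Y2 * X2) $$ (c - k*n, d - k*n)"
        by (rule mult_entry_sum[symmetric, OF Y2 X2 cm dm])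
      also have "\<dots> = 1\<^sub>m N $$ (c,d)" using Y2X2 cm dm cd c d by auto
      finally show ?thesis .
    qed
  qed
qed (use T_c S_c in auto)

end


lemma blk_facts: assumes n0: "(0::nat) < n" and t: "t < k" and a: "a < n"
  shows "t*n + a < k*n" "(t*n + a) div n = t" "(t*n + a) mod n = a"
proof -
  have "t*n + a < t*n + n" using a by simp
  also have "\<dots> = Suc t * n" by simp
  also have "\<dots> \<le> k * n" using t by (intro mult_le_mono1) simp
  finally show "t*n + a < k*n" .
  show "(t*n + a) div n = t" using n0 a by simp
  show "(t*n + a) mod n = a" using n0 a by simp
qed

context hrep begin

lemma ST: "S * T = 1\<^sub>m r"
proof (rule eq_matI)
  fix i j assume "i < dim_row (1\<^sub>m r :: 'a mat)" "j < dim_col (1\<^sub>m r :: 'a mat)"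
  hence ij: "i < r" "j < r" by auto
  have "(S * T) $$ (i,j) = (\<Sum>c<k*n + m. S $$ (i,c) * T $$ (c,j))"
    by (rule mult_entry_sum[OF S_c T_c ij])
  also have "\<dots> = (\<Sum>c<k*n. S $$ (i,c) * T $$ (c,j)) + (\<Sum>c<m. S $$ (i,k*n+c) * T $$ (k*n+c,j))"
    by (rule sum_split)
  also have "(\<Sum>c<k*n. S $$ (i,c) * T $$ (c,j)) = (\<Sum>t<k. \<Sum>a<n. S $$ (i,t*n+a) * T $$ (t*n+a,j))"
    by (rule sum_blocks)
  also have "\<dots> = (\<Sum>t<k. \<Sum>a<n. V a $$ (i,t) * W a $$ (t,j))"
  proof (intro sum.cong refl)
    fix t a assume "t \<in> {..<k}" "a \<in> {..<n}"
    hence ta: "t < k" "a < n" by auto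
    note bf = blk_facts[OF n0 ta]
    have "t*n+a < N" using bf by simp
    thus "S $$ (i,t*n+a) * T $$ (t*n+a,j) = V a $$ (i,t) * W a $$ (t,j)"
      using bf ij by (simp add: S_def T_def)
  qed
  also have "\<dots> = (\<Sum>a<n. \<Sum>t<k. V a $$ (i,t) * W a $$ (t,j))" by (rule sum.swap)
  also have "\<dots> = (\<Sum>a<n. \<psi> (U a a) $$ (i,j))"
  proof (intro sum.cong refl)
    fix a assume "a \<in> {..<n}"
    hence a: "a < n" by simp
    have "(\<Sum>t<k. V a $$ (i,t) * W a $$ (t,j)) = (V a * W a) $$ (i,j)"
      by (rule mult_entry_sum[symmetric, OF V_c W_c ij])
    thus "(\<Sum>t<k. V a $$ (i,t) * W a $$ (t,j)) = \<psi> (U a a) $$ (i,j)" using VW[OF a] by simp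
  qed
  also have "\<dots> = P $$ (i,j)" using P_entry[OF ij] by simp
  also have "(\<Sum>c<m. S $$ (i,k*n+c) * T $$ (k*n+c,j)) = (\<Sum>c<m. X2 $$ (i,c) * Y2 $$ (c,j))"
    using ij by (intro sum.cong refl) (simp add: S_def T_def)
  also have "\<dots> = (X2 * Y2) $$ (i,j)" by (rule mult_entry_sum[symmetric, OF X2 Y2 ij])
  also have "\<dots> = 1\<^sub>m r $$ (i,j) - P $$ (i,j)" using X2Y2 ij P_c by simp
  finally show "(S * T) $$ (i,j) = 1\<^sub>m r $$ (i,j)" by simp
qed (use S_c T_c in auto)

lemma Nr: "N = r"
  using inv_dim_le[OF S_c T_c TS] inv_dim_le[OF T_c S_c ST] by simp

lemma S_c': "S \<in> carrier_mat r r" using S_c Nr by simp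
lemma T_c': "T \<in> carrier_mat r r" using T_c Nr by simp
lemma TS': "T * S = 1\<^sub>m r" using TS Nr by simp
lemma kn: "k * n \<le> r" using Nr by simp

lemma main_comm: assumes A: "A \<in> carrier_mat n n"
  shows "\<psi> A * S = S * padded_kron_id r k A"
proof (rule eq_matI)
  have Pc: "padded_kron_id r k A \<in> carrier_mat r r" by (rule padded_carrier[OF A kn])
  fix i d assume "i < dim_row (S * padded_kron_id r k A)" "d < dim_col (S * padded_kron_id r k A)"
  hence id: "i < r" "d < r" using S_c' Pc by auto
  have L: "(\<psi> A * S) $$ (i,d) = (\<Sum>l<r. \<psi> A $$ (i,l) * S $$ (l,d))"
    by (rule mult_entry_sum[OF psi_c[OF A] S_c' id])
  have "(S * padded_kron_id r k A) $$ (i,d) = (\<Sum>c<r. S $$ (i,c) * padded_kron_id r k A $$ (c,d))"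
    by (rule mult_entry_sum[OF S_c' Pc id])
  also have "\<dots> = (\<Sum>c<k*n + m. S $$ (i,c) * padded_kron_id r k A $$ (c,d))" using Nr by simp
  also have "\<dots> = (\<Sum>c<k*n. S $$ (i,c) * padded_kron_id r k A $$ (c,d))
      + (\<Sum>c<m. S $$ (i,k*n+c) * padded_kron_id r k A $$ (k*n+c,d))"
    by (rule sum_split)
  also have "(\<Sum>c<m. S $$ (i,k*n+c) * padded_kron_id r k A $$ (k*n+c,d)) = 0"
    using id Nr padded_index[OF A kn] by (intro sum.neutral ballI) simp
  finally have Rr: "(S * padded_kron_id r k A) $$ (i,d) = (\<Sum>c<k*n. S $$ (i,c) * padded_kron_id r k A $$ (c,d))"
    by simp
  show "(\<psi> A * S) $$ (i,d) = (S * padded_kron_id r k A) $$ (i,d)"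
  proof (cases "d < k*n")
    case d: True
    define s where "s = d div n"
    define b where "b = d mod n"
    have s: "s < k" unfolding s_def using d by (simp add: less_mult_imp_div_less)
    have b: "b < n" unfolding b_def using n0 by simp
    have dsb: "d = s*n + b" unfolding s_def b_def by simp
    have "(\<psi> A * S) $$ (i,d) = (\<Sum>l<r. \<psi> A $$ (i,l) * V b $$ (l,s))"
      unfolding L using d by (intro sum.cong refl) (simp add: S_def s_def b_def)
    also have "\<dots> = (\<psi> A * V b) $$ (i,s)" by (rule mult_entry_sum[symmetric, OF psi_c[OF A] V_c id(1) s])
    also have "\<dots> = (\<Sum>a<n. A $$ (a,b) * V a $$ (i,s))" by (rule AV_entry[OF A b id(1) s])
    finally have LL: "(\<psi> A * S) $$ (i,d) = (\<Sum>a<n. A $$ (a,b) * V a $$ (i,s))" .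
    have "(\<Sum>c<k*n. S $$ (i,c) * padded_kron_id r k A $$ (c,d))
        = (\<Sum>t<k. \<Sum>a<n. S $$ (i,t*n+a) * padded_kron_id r k A $$ (t*n+a,d))"
      by (rule sum_blocks)
    also have "\<dots> = (\<Sum>t<k. \<Sum>a<n. if t = s then V a $$ (i,t) * A $$ (a,b) else 0)"
    proof (intro sum.cong refl)
      fix t a assume "t \<in> {..<k}" "a \<in> {..<n}"
      hence ta: "t < k" "a < n" by auto
      note bf = blk_facts[OF n0 ta]
      have "t*n+a < r" using bf kn by simp
      hence "padded_kron_id r k A $$ (t*n+a,d) = (if t = s then A $$ (a,b) else 0)"
        using padded_index[OF A kn _ id(2), of "t*n+a"] bf d unfolding s_def b_def by simp
      thus "S $$ (i,t*n+a) * padded_kron_id r k A $$ (t*n+a,d) = (if t = s then V a $$ (i,t) * A $$ (a,b) else 0)"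
        using bf id by (simp add: S_def)
    qed
    also have "\<dots> = (\<Sum>a<n. \<Sum>t<k. if t = s then V a $$ (i,t) * A $$ (a,b) else 0)" by (rule sum.swap)
    also have "\<dots> = (\<Sum>a<n. A $$ (a,b) * V a $$ (i,s))" using s by (simp add: mult.commute)
    finally show ?thesis using LL Rr by simp
  next
    case d: False
    have dm: "d - k*n < m" using id Nr d by simp
    have dN: "d < N" using id Nr by simp
    have "(\<psi> A * S) $$ (i,d) = (\<Sum>l<r. \<psi> A $$ (i,l) * X2 $$ (l,d - k*n))"
      unfolding L using d dN by (intro sum.cong refl) (simp add: S_def)
    also have "\<dots> = (\<psi> A * X2) $$ (i,d - k*n)" by (rule mult_entry_sum[symmetric, OF psi_c[OF A] X2 id(1) dm])
    also have "\<dots> = 0" using psiX2[OF A] id dm by simp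
    finally have LL: "(\<psi> A * S) $$ (i,d) = 0" .
    have "(\<Sum>c<k*n. S $$ (i,c) * padded_kron_id r k A $$ (c,d)) = 0"
      using id d kn padded_index[OF A kn] by (intro sum.neutral ballI) simp
    thus ?thesis using LL Rr by simp
  qed
qed (use psi_c[OF A] S_c' padded_carrier[OF A kn] in auto)

lemma main_rep: assumes A: "A \<in> carrier_mat n n"
  shows "\<psi> A = S * padded_kron_id r k A * T"
proof -
  have Pc: "padded_kron_id r k A \<in> carrier_mat r r" by (rule padded_carrier[OF A kn])
  have "\<psi> A = \<psi> A * (S * T)" using ST psi_c[OF A] by simp
  also have "\<dots> = (\<psi> A * S) * T" using assoc_mult_mat[OF psi_c[OF A] S_c' T_c'] by simp
  also have "\<dots> = S * padded_kron_id r k A * T" using main_comm[OF A] by simp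
  finally show ?thesis .
qed

lemma unital_m0: assumes "P = 1\<^sub>m r" shows "m = 0"
proof (rule ccontr)
  assume m: "m \<noteq> 0"
  have "R = 0\<^sub>m r r" using assms self_minus[OF one_carrier_mat, of r] by simp
  hence z: "X2 * Y2 = 0\<^sub>m r r" using X2Y2 by simp
  have "1\<^sub>m m = (Y2 * X2) * (Y2 * X2)" using Y2X2 by simp
  also have "\<dots> = Y2 * (X2 * Y2) * X2" by (rule assoc_mid[OF Y2 X2 Y2 X2])
  also have "\<dots> = 0\<^sub>m m m" using z Y2 X2 by (simp add: right_mult_zero_mat left_mult_zero_mat)
  finally have "(1\<^sub>m m :: 'a mat) $$ (0,0) = 0\<^sub>m m m $$ (0,0)" by simp
  thus False using m by simp
qed

end


lemma idem_compl: assumes Pc: "P \<in> carrier_mat r r" and PP: "P * P = (P :: 'a::field mat)"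
  shows "(1\<^sub>m r - P) * (1\<^sub>m r - P) = 1\<^sub>m r - P"
proof -
  have Rc: "1\<^sub>m r - P \<in> carrier_mat r r" using Pc by (rule minus_carrier_mat)
  have "(1\<^sub>m r - P) * (1\<^sub>m r - P) = 1\<^sub>m r * (1\<^sub>m r - P) - P * (1\<^sub>m r - P)"
    by (rule minus_mult_distrib_mat[OF one_carrier_mat Pc Rc])
  also have "P * (1\<^sub>m r - P) = P * 1\<^sub>m r - P * P" by (rule mult_minus_distrib_mat[OF Pc one_carrier_mat Pc])
  finally have "(1\<^sub>m r - P) * (1\<^sub>m r - P) = (1\<^sub>m r - P) - (P - P)" using Pc Rc PP by simp
  also have "\<dots> = 1\<^sub>m r - P" using Pc by (intro eq_matI) auto
  finally show ?thesis .
qed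

lemma hom_rep:
  fixes \<psi> :: "'a::field mat \<Rightarrow> 'a mat"
  assumes lin: "linear_mat_map n r \<psi>"
    and mult: "\<And>A B. A \<in> carrier_mat n n \<Longrightarrow> B \<in> carrier_mat n n \<Longrightarrow> \<psi> (A * B) = \<psi> A * \<psi> B"
  shows "\<exists>k S Sinv. k * n \<le> r \<and> S \<in> carrier_mat r r \<and> Sinv \<in> carrier_mat r r \<and>
           S * Sinv = 1\<^sub>m r \<and> Sinv * S = 1\<^sub>m r \<and>
           (\<forall>A \<in> carrier_mat n n. \<psi> A = S * padded_kron_id r k A * Sinv) \<and>
           (\<psi> (1\<^sub>m n) = 1\<^sub>m r \<longrightarrow> r = n * k)"
proof (cases "n = 0")
  case True
  have A0: "A = 0\<^sub>m 0 0" if "A \<in> carrier_mat n n" for A :: "'a mat"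
    using that True by (intro eq_matI) auto
  have pad0: "padded_kron_id r 0 A = 0\<^sub>m r r" if A: "A \<in> carrier_mat n n" for A :: "'a mat"
  proof (rule eq_matI)
    have Pc: "padded_kron_id r 0 A \<in> carrier_mat r r" by (rule padded_carrier[OF A]) simp
    show "dim_row (padded_kron_id r 0 A) = dim_row (0\<^sub>m r r :: 'a mat)"
         "dim_col (padded_kron_id r 0 A) = dim_col (0\<^sub>m r r :: 'a mat)" using Pc by auto
    fix i j assume "i < dim_row (0\<^sub>m r r :: 'a mat)" "j < dim_col (0\<^sub>m r r :: 'a mat)"
    hence "i < r" "j < r" by auto
    thus "padded_kron_id r 0 A $$ (i,j) = 0\<^sub>m r r $$ (i,j)" using padded_index[OF A, of 0 r i j] by simp
  qed
  have rep: "\<forall>A \<in> carrier_mat n n. \<psi> A = 1\<^sub>m r * padded_kron_id r 0 A * 1\<^sub>m r"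
  proof
    fix A :: "'a mat" assume A: "A \<in> carrier_mat n n"
    have "\<psi> A = 0\<^sub>m r r" using A0[OF A] lin_zero[OF lin] True by simp
    thus "\<psi> A = 1\<^sub>m r * padded_kron_id r 0 A * 1\<^sub>m r" using pad0[OF A] by simp
  qed
  have un: "\<psi> (1\<^sub>m n) = 1\<^sub>m r \<longrightarrow> r = n * 0"
  proof
    assume h: "\<psi> (1\<^sub>m n) = 1\<^sub>m r"
    have "\<psi> (1\<^sub>m n) = 0\<^sub>m r r" using A0[OF one_carrier_mat] lin_zero[OF lin] True by simp
    hence e: "(1\<^sub>m r :: 'a mat) = 0\<^sub>m r r" using h by simp
    show "r = n * 0"
    proof (rule ccontr)
      assume "r \<noteq> n * 0"
      hence "0 < r" by simp
      hence "(1\<^sub>m r :: 'a mat) $$ (0,0) = 0\<^sub>m r r $$ (0,0)" using e by simp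
      thus False using \<open>0 < r\<close> by simp
    qed
  qed
  show ?thesis
    by (rule exI[of _ 0], rule exI[of _ "1\<^sub>m r"], rule exI[of _ "1\<^sub>m r"]) (use rep un in simp)
next
  case False
  hence n0: "0 < n" by simp
  let ?Q = "\<psi> (umat n 0 0)"
  have Qc: "?Q \<in> carrier_mat r r" using lin_carrier[OF lin umat_carrier] .
  have QQ: "?Q * ?Q = ?Q" using mult[OF umat_carrier umat_carrier, of 0 0 0 0] n0 by (simp add: umat_mult)
  obtain k X1 Y1 where X1: "X1 \<in> carrier_mat r k" and Y1: "Y1 \<in> carrier_mat k r"
    and Y1X1: "Y1 * X1 = 1\<^sub>m k" and X1Y1: "X1 * Y1 = ?Q"
    using idem_factor[OF Qc QQ] by blast
  let ?P = "\<psi> (1\<^sub>m n)"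
  have Pc: "?P \<in> carrier_mat r r" using lin_carrier[OF lin one_carrier_mat] .
  have PP: "?P * ?P = ?P" using mult[OF one_carrier_mat one_carrier_mat] by simp
  have Rc: "1\<^sub>m r - ?P \<in> carrier_mat r r" using Pc by (rule minus_carrier_mat)
  obtain m X2 Y2 where X2: "X2 \<in> carrier_mat r m" and Y2: "Y2 \<in> carrier_mat m r"
    and Y2X2: "Y2 * X2 = 1\<^sub>m m" and X2Y2: "X2 * Y2 = 1\<^sub>m r - ?P"
    using idem_factor[OF Rc idem_compl[OF Pc PP]] by blast
  interpret h: hrep n r \<psi> k m X1 Y1 X2 Y2
    by (unfold_locales) (use lin mult n0 X1 Y1 Y1X1 X1Y1 X2 Y2 Y2X2 X2Y2 in auto)
  have un: "?P = 1\<^sub>m r \<longrightarrow> r = n * k" using h.unital_m0 h.Nr by auto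
  show ?thesis
    by (rule exI[of _ k], rule exI[of _ h.S], rule exI[of _ h.T])
      (use h.kn h.S_c' h.T_c' h.ST h.TS' h.main_rep un in auto)
qed



lemma add_diff_mat: assumes "X \<in> carrier_mat a b" "Y \<in> carrier_mat a b"
  shows "X = Y + (X - (Y :: 'a::field mat))"
  using assms by (intro eq_matI) auto

theorem corollary3p4:
  fixes \<Phi> :: "'a::field mat \<Rightarrow> 'a mat" and n r :: nat
  assumes lin: "linear_mat_map n r \<Phi>"
    and zp: "preserves_zero_products n r \<Phi>"
    and idem: "\<Phi> (1\<^sub>m n) * \<Phi> (1\<^sub>m n) = \<Phi> (1\<^sub>m n)"
  shows "\<exists>k S Sinv. k * n \<le> r \<and> S \<in> carrier_mat r r \<and> Sinv \<in> carrier_mat r r \<and>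
           S * Sinv = 1\<^sub>m r \<and> Sinv * S = 1\<^sub>m r \<and>
           (\<forall>A \<in> carrier_mat n n.
              \<Phi> (1\<^sub>m n) * \<Phi> A = \<Phi> A * \<Phi> (1\<^sub>m n) \<and>
              \<Phi> (1\<^sub>m n) * \<Phi> A = S * padded_kron_id r k A * Sinv) \<and>
           algebra_hom_mat n r (\<lambda>A. \<Phi> (1\<^sub>m n) * \<Phi> A) \<and>
           linear_mat_map n r (\<lambda>A. (1\<^sub>m r - \<Phi> (1\<^sub>m n)) * \<Phi> A) \<and>
           (\<forall>X \<in> carrier_mat n n. \<forall>Y \<in> carrier_mat n n.
              ((1\<^sub>m r - \<Phi> (1\<^sub>m n)) * \<Phi> X) * ((1\<^sub>m r - \<Phi> (1\<^sub>m n)) * \<Phi> Y) = 0\<^sub>m r r) \<and>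
           (\<forall>A \<in> carrier_mat n n.
              \<Phi> A = \<Phi> (1\<^sub>m n) * \<Phi> A + (1\<^sub>m r - \<Phi> (1\<^sub>m n)) * \<Phi> A) \<and>
           (\<Phi> (1\<^sub>m n) = 1\<^sub>m r \<longrightarrow>
              r = n * k \<and> algebra_hom_mat n r \<Phi> \<and>
              (\<forall>A \<in> carrier_mat n n. \<Phi> A = S * kron_id k A * Sinv))"
proof -
  define P where "P = \<Phi> (1\<^sub>m n)"
  define R where "R = 1\<^sub>m r - P"
  have I: "1\<^sub>m n \<in> carrier_mat n n" by simp
  have Pc: "P \<in> carrier_mat r r" unfolding P_def using lin_carrier[OF lin I] .
  have Rc: "R \<in> carrier_mat r r" unfolding R_def using Pc by (rule minus_carrier_mat)
  have PP: "P * P = P" using idem unfolding P_def .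
  have RR: "R * R = R" unfolding R_def by (rule idem_compl[OF Pc PP])
  have Fc: "\<And>A. A \<in> carrier_mat n n \<Longrightarrow> \<Phi> A \<in> carrier_mat r r" using lin_carrier[OF lin] .
  have C2: "\<Phi> A * \<Phi> B = P * \<Phi> (A * B)" if A: "A \<in> carrier_mat n n" and B: "B \<in> carrier_mat n n" for A B
    using key[OF lin zp I B A] A unfolding P_def by simp
  have C3: "P * \<Phi> A = \<Phi> A * P" if A: "A \<in> carrier_mat n n" for A
    using C2[OF A I] A unfolding P_def by simp
  define \<psi> where "\<psi> A = P * \<Phi> A" for A
  have psi_lin: "linear_mat_map n r \<psi>" unfolding \<psi>_def by (rule lin_left[OF lin Pc])
  have psi_mult: "\<psi> (A * B) = \<psi> A * \<psi> B" if A: "A \<in> carrier_mat n n" and B: "B \<in> carrier_mat n n" for A B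
  proof -
    have "\<psi> A * \<psi> B = P * (\<Phi> A * P) * \<Phi> B" unfolding \<psi>_def by (rule assoc_mid[OF Pc Fc[OF A] Pc Fc[OF B]])
    also have "\<dots> = P * (P * \<Phi> A) * \<Phi> B" using C3[OF A] by simp
    also have "P * (P * \<Phi> A) = P * \<Phi> A" using assoc_mult_mat[OF Pc Pc Fc[OF A]] PP by simp
    also have "P * \<Phi> A * \<Phi> B = P * (\<Phi> A * \<Phi> B)" using assoc_mult_mat[OF Pc Fc[OF A] Fc[OF B]] .
    also have "\<dots> = P * (P * \<Phi> (A * B))" using C2[OF A B] by simp
    also have "\<dots> = P * \<Phi> (A * B)" using assoc_mult_mat[OF Pc Pc Fc[OF mult_carrier_mat[OF A B]]] PP by simp
    finally show ?thesis unfolding \<psi>_def by simp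
  qed
  have psi_hom: "algebra_hom_mat n r \<psi>" unfolding algebra_hom_mat_def using psi_lin psi_mult by blast
  obtain k S Sinv where kn: "k * n \<le> r" and Sc: "S \<in> carrier_mat r r" and Tc: "Sinv \<in> carrier_mat r r"
    and ST: "S * Sinv = 1\<^sub>m r" and TS: "Sinv * S = 1\<^sub>m r"
    and rep: "\<forall>A \<in> carrier_mat n n. \<psi> A = S * padded_kron_id r k A * Sinv"
    and un: "\<psi> (1\<^sub>m n) = 1\<^sub>m r \<longrightarrow> r = n * k"
    using hom_rep[OF psi_lin psi_mult] by blast
  have psi1: "\<psi> (1\<^sub>m n) = P" unfolding \<psi>_def P_def using idem by simp
  have R_lin: "linear_mat_map n r (\<lambda>A. R * \<Phi> A)" by (rule lin_left[OF lin Rc])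
  have RP: "R * P = 0\<^sub>m r r"
  proof -
    have "R * P = 1\<^sub>m r * P - P * P" unfolding R_def by (rule minus_mult_distrib_mat[OF one_carrier_mat Pc Pc])
    thus ?thesis using PP Pc self_minus[OF Pc] by simp
  qed
  have FR: "\<Phi> A * R = R * \<Phi> A" if A: "A \<in> carrier_mat n n" for A
  proof -
    have "\<Phi> A * R = \<Phi> A * 1\<^sub>m r - \<Phi> A * P" unfolding R_def by (rule mult_minus_distrib_mat[OF Fc[OF A] one_carrier_mat Pc])
    also have "\<dots> = 1\<^sub>m r * \<Phi> A - P * \<Phi> A" using C3[OF A] Fc[OF A] by simp
    also have "\<dots> = R * \<Phi> A" unfolding R_def by (rule minus_mult_distrib_mat[OF one_carrier_mat Pc Fc[OF A], symmetric])
    finally show ?thesis .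
  qed
  have zero: "(R * \<Phi> X) * (R * \<Phi> Y) = 0\<^sub>m r r" if X: "X \<in> carrier_mat n n" and Y: "Y \<in> carrier_mat n n" for X Y
  proof -
    have "(R * \<Phi> X) * (R * \<Phi> Y) = R * (\<Phi> X * R) * \<Phi> Y" by (rule assoc_mid[OF Rc Fc[OF X] Rc Fc[OF Y]])
    also have "\<dots> = R * (R * \<Phi> X) * \<Phi> Y" using FR[OF X] by simp
    also have "R * (R * \<Phi> X) = R * \<Phi> X" using assoc_mult_mat[OF Rc Rc Fc[OF X]] RR by simp
    also have "R * \<Phi> X * \<Phi> Y = R * (\<Phi> X * \<Phi> Y)" using assoc_mult_mat[OF Rc Fc[OF X] Fc[OF Y]] .
    also have "\<dots> = R * (P * \<Phi> (X * Y))" using C2[OF X Y] by simp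
    also have "\<dots> = (R * P) * \<Phi> (X * Y)" using assoc_mult_mat[OF Rc Pc Fc[OF mult_carrier_mat[OF X Y]]] by simp
    also have "\<dots> = 0\<^sub>m r r" using RP Fc[OF mult_carrier_mat[OF X Y]] by (simp add: left_mult_zero_mat)
    finally show ?thesis .
  qed
  have decomp: "\<Phi> A = P * \<Phi> A + R * \<Phi> A" if A: "A \<in> carrier_mat n n" for A
  proof -
    have "R * \<Phi> A = 1\<^sub>m r * \<Phi> A - P * \<Phi> A" unfolding R_def by (rule minus_mult_distrib_mat[OF one_carrier_mat Pc Fc[OF A]])
    hence "R * \<Phi> A = \<Phi> A - P * \<Phi> A" using Fc[OF A] by simp
    moreover have "\<Phi> A = P * \<Phi> A + (\<Phi> A - P * \<Phi> A)"
      by (rule add_diff_mat[OF Fc[OF A] mult_carrier_mat[OF Pc Fc[OF A]]])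
    ultimately show ?thesis by simp
  qed
  have unital: "r = n * k \<and> algebra_hom_mat n r \<Phi> \<and> (\<forall>A \<in> carrier_mat n n. \<Phi> A = S * kron_id k A * Sinv)"
    if P1: "P = 1\<^sub>m r"
  proof -
    have r: "r = n * k" using un psi1 P1 by simp
    have pe: "\<psi> A = \<Phi> A" if A: "A \<in> carrier_mat n n" for A unfolding \<psi>_def P1 using Fc[OF A] by simp
    have "\<forall>A \<in> carrier_mat n n. \<forall>B \<in> carrier_mat n n. \<Phi> (A * B) = \<Phi> A * \<Phi> B"
    proof (intro ballI)
      fix A B :: "'a mat" assume A: "A \<in> carrier_mat n n" and B: "B \<in> carrier_mat n n"
      have "\<Phi> (A * B) = \<psi> (A * B)" using pe[OF mult_carrier_mat[OF A B]] by simp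
      also have "\<dots> = \<psi> A * \<psi> B" by (rule psi_mult[OF A B])
      also have "\<dots> = \<Phi> A * \<Phi> B" using pe[OF A] pe[OF B] by simp
      finally show "\<Phi> (A * B) = \<Phi> A * \<Phi> B" .
    qed
    hence hom: "algebra_hom_mat n r \<Phi>" unfolding algebra_hom_mat_def using lin by blast
    have "\<forall>A \<in> carrier_mat n n. \<Phi> A = S * kron_id k A * Sinv"
    proof
      fix A :: "'a mat" assume A: "A \<in> carrier_mat n n"
      have "padded_kron_id r k A = kron_id k A" by (rule padded_full[OF A]) (simp add: r)
      thus "\<Phi> A = S * kron_id k A * Sinv" using rep A pe[OF A] by simp
    qed
    thus ?thesis using r hom by blast
  qed
  have psi_eq: "\<psi> = (\<lambda>A. P * \<Phi> A)" by (rule ext) (simp add: \<psi>_def)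
  have g6: "\<forall>A \<in> carrier_mat n n. P * \<Phi> A = \<Phi> A * P \<and> P * \<Phi> A = S * padded_kron_id r k A * Sinv"
    using C3 rep unfolding \<psi>_def by blast
  have g7: "algebra_hom_mat n r (\<lambda>A. P * \<Phi> A)" using psi_hom unfolding psi_eq .
  have g9: "\<forall>X \<in> carrier_mat n n. \<forall>Y \<in> carrier_mat n n. (R * \<Phi> X) * (R * \<Phi> Y) = 0\<^sub>m r r"
    using zero by blast
  have g10: "\<forall>A \<in> carrier_mat n n. \<Phi> A = P * \<Phi> A + R * \<Phi> A" using decomp by blast
  have g11: "P = 1\<^sub>m r \<longrightarrow> r = n * k \<and> algebra_hom_mat n r \<Phi> \<and> (\<forall>A \<in> carrier_mat n n. \<Phi> A = S * kron_id k A * Sinv)"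
    using unital by blast
  have all: "k * n \<le> r \<and> S \<in> carrier_mat r r \<and> Sinv \<in> carrier_mat r r \<and>
           S * Sinv = 1\<^sub>m r \<and> Sinv * S = 1\<^sub>m r \<and>
           (\<forall>A \<in> carrier_mat n n. P * \<Phi> A = \<Phi> A * P \<and> P * \<Phi> A = S * padded_kron_id r k A * Sinv) \<and>
           algebra_hom_mat n r (\<lambda>A. P * \<Phi> A) \<and>
           linear_mat_map n r (\<lambda>A. R * \<Phi> A) \<and>
           (\<forall>X \<in> carrier_mat n n. \<forall>Y \<in> carrier_mat n n. (R * \<Phi> X) * (R * \<Phi> Y) = 0\<^sub>m r r) \<and>
           (\<forall>A \<in> carrier_mat n n. \<Phi> A = P * \<Phi> A + R * \<Phi> A) \<and>
           (P = 1\<^sub>m r \<longrightarrow> r = n * k \<and> algebra_hom_mat n r \<Phi> \<and> (\<forall>A \<in> carrier_mat n n. \<Phi> A = S * kron_id k A * Sinv))"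
    using kn Sc Tc ST TS g6 g7 R_lin g9 g10 g11 by (intro conjI)
  show ?thesis using all unfolding R_def P_def by blast
qed


end
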